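(* Let $n\in\mathbb{N}$ and $\hbar\in{]0,\infty[}$. The map $\Theta_\hbar:\mathscr{P}(\mathbb{C}^{1+n})\to\mathscr{P}(\mathbb{C}^{1+n})$, $$\Theta_\hbar(f)=\Big(\exp\Big(-\hbar\sum_{j=0}^n\frac{\partial^2}{\partial z_j\partial\overline{z_j}}\Big)f\Big)\circ\overline{\,\cdot\,},$$ where $\overline{\,\cdot\,}:\mathbb{C}^{1+n}\to\mathbb{C}^{1+n}$ is componentwise complex conjugation, is a linear bijection satisfying $\Theta_\hbar(f\star_\hbar g)=\Theta_\hbar(f)\star_{-\hbar}\Theta_\hbar(g)$ and $\Theta_\hbar(\overline{f})=\overline{\Theta_\hbar(f)}$ for all $f,g\in\mathscr{P}(\mathbb{C}^{1+n})$; i.e. it is a $^*$-isomorphism from $(\mathscr{P}(\mathbb{C}^{1+n}),\star_\hbar)$ to $(\mathscr{P}(\mathbb{C}^{1+n}),\star_{-\hbar})$.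
   Context: $\mathscr{P}(\mathbb{C}^{1+n})$ is the space of complex polynomials in $z_0,\dots,z_n,\overline{z_0},\dots,\overline{z_n}$. For $\hbar\in\mathbb{R}$, the Wick product is $f\star_\hbar g=\sum_{K\in\mathbb{N}_0^{1+n}}\frac{\hbar^{|K|}}{K!}\frac{\partial^{|K|}f}{\partial\overline{z}^K}\frac{\partial^{|K|}g}{\partial z^K}$, with involution pointwise complex conjugation. *)

theory Defs
  imports Complex_Main "HOL-Library.Poly_Mapping" "HOL-Library.Product_Plus"
begin

text \<open>Polynomials in z_0,..,z_n, conj z_0,..,conj z_n with complex coefficients, represented
  by their (finitely supported) coefficient function on monomials.  A monomial
  z^a (conj z)^b is the pair (a,b) of exponent multi-indices (a for the holomorphic
  variables, b for the antiholomorphic ones).  The pointwise product of polynomial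
  functions is the product of poly_mappings (convolution of coefficients).\<close>

type_synonym mono = "(nat \<Rightarrow>\<^sub>0 nat) \<times> (nat \<Rightarrow>\<^sub>0 nat)"
type_synonym cpoly = "mono \<Rightarrow>\<^sub>0 complex"

definition Pn :: "nat \<Rightarrow> cpoly set" where
  "Pn n = {f. \<forall>m\<in>Poly_Mapping.keys (f::cpoly). Poly_Mapping.keys (fst m) \<subseteq> {..n} \<and> Poly_Mapping.keys (snd m) \<subseteq> {..n}}"

definition psmult :: "complex \<Rightarrow> cpoly \<Rightarrow> cpoly" where
  "psmult c f = Poly_Mapping.map (\<lambda>x. c * x) f"

text \<open>Pointwise complex conjugation of the polynomial function:
  conj (c z^a (conj z)^b) = (conj c) z^b (conj z)^a.\<close>
definition pconj :: "cpoly \<Rightarrow> cpoly" where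
  "pconj f = (\<Sum>m\<in>Poly_Mapping.keys f. Poly_Mapping.single (snd m, fst m) (cnj (Poly_Mapping.lookup f m)))"

text \<open>Composition with componentwise conjugation of the argument:
  (f o conj)(z) = f(conj z), i.e. c z^a (conj z)^b becomes c z^b (conj z)^a.\<close>
definition compconj :: "cpoly \<Rightarrow> cpoly" where
  "compconj f = (\<Sum>m\<in>Poly_Mapping.keys f. Poly_Mapping.single (snd m, fst m) (Poly_Mapping.lookup f m))"

definition dz :: "nat \<Rightarrow> cpoly \<Rightarrow> cpoly" where
  "dz j f = (\<Sum>m\<in>Poly_Mapping.keys f. Poly_Mapping.single (fst m - Poly_Mapping.single j 1, snd m)
              (of_nat (Poly_Mapping.lookup (fst m) j) * Poly_Mapping.lookup f m))"

definition dzb :: "nat \<Rightarrow> cpoly \<Rightarrow> cpoly" where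
  "dzb j f = (\<Sum>m\<in>Poly_Mapping.keys f. Poly_Mapping.single (fst m, snd m - Poly_Mapping.single j 1)
              (of_nat (Poly_Mapping.lookup (snd m) j) * Poly_Mapping.lookup f m))"

definition dzK :: "(nat \<Rightarrow>\<^sub>0 nat) \<Rightarrow> cpoly \<Rightarrow> cpoly" where
  "dzK K f = fold (\<lambda>j g. (dz j ^^ Poly_Mapping.lookup K j) g) (sorted_list_of_set (Poly_Mapping.keys K)) f"

definition dzbK :: "(nat \<Rightarrow>\<^sub>0 nat) \<Rightarrow> cpoly \<Rightarrow> cpoly" where
  "dzbK K f = fold (\<lambda>j g. (dzb j ^^ Poly_Mapping.lookup K j) g) (sorted_list_of_set (Poly_Mapping.keys K)) f"

definition mabs :: "(nat \<Rightarrow>\<^sub>0 nat) \<Rightarrow> nat" where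
  "mabs K = (\<Sum>j\<in>Poly_Mapping.keys K. Poly_Mapping.lookup K j)"

definition mfact :: "(nat \<Rightarrow>\<^sub>0 nat) \<Rightarrow> nat" where
  "mfact K = (\<Prod>j\<in>Poly_Mapping.keys K. fact (Poly_Mapping.lookup K j))"

text \<open>Wick product.  The series over all multi-indices K has only finitely many
  nonzero terms; its value is the (finite) sum of the nonzero terms.\<close>
definition wick_term :: "real \<Rightarrow> cpoly \<Rightarrow> cpoly \<Rightarrow> (nat \<Rightarrow>\<^sub>0 nat) \<Rightarrow> cpoly" where
  "wick_term h f g K =
     psmult (complex_of_real (h ^ mabs K / real (mfact K))) (dzbK K f * dzK K g)"

definition wick :: "real \<Rightarrow> cpoly \<Rightarrow> cpoly \<Rightarrow> cpoly" where
  "wick h f g = (\<Sum>K\<in>{K. wick_term h f g K \<noteq> 0}. wick_term h f g K)"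

definition lap :: "nat \<Rightarrow> cpoly \<Rightarrow> cpoly" where
  "lap n f = (\<Sum>j\<le>n. dz j (dzb j f))"

text \<open>exp(-h * lap) f = sum_k (-h)^k/k! lap^k f; finitely many nonzero terms
  since lap is nilpotent on each polynomial.\<close>
definition exp_term :: "nat \<Rightarrow> real \<Rightarrow> cpoly \<Rightarrow> nat \<Rightarrow> cpoly" where
  "exp_term n h f k = psmult (complex_of_real ((- h) ^ k / fact k)) ((lap n ^^ k) f)"

definition exp_lap :: "nat \<Rightarrow> real \<Rightarrow> cpoly \<Rightarrow> cpoly" where
  "exp_lap n h f = (\<Sum>k\<in>{k. exp_term n h f k \<noteq> 0}. exp_term n h f k)"

definition Theta :: "nat \<Rightarrow> real \<Rightarrow> cpoly \<Rightarrow> cpoly" where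
  "Theta n h f = compconj (exp_lap n h f)"

end

theory Submission
  imports Defs "HOL-Library.FuncSet"
begin


abbreviation sg :: "mono \<Rightarrow> complex \<Rightarrow> cpoly" where "sg \<equiv> Poly_Mapping.single"
abbreviation lk :: "cpoly \<Rightarrow> mono \<Rightarrow> complex" where "lk \<equiv> Poly_Mapping.lookup"
abbreviation ks :: "cpoly \<Rightarrow> mono set" where "ks \<equiv> Poly_Mapping.keys"
abbreviation e1 :: "nat \<Rightarrow> nat \<Rightarrow>\<^sub>0 nat" where "e1 j \<equiv> Poly_Mapping.single j (Suc 0)"
definition cst :: "complex \<Rightarrow> cpoly" where "cst c = Poly_Mapping.single 0 c"

lemma psmult_cst: "psmult c f = cst c * f"
  unfolding psmult_def cst_def by (metis mult_map_scale_conv_mult)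

lemma cst_0[simp]: "cst 0 = 0" by (simp add: cst_def)
lemma cst_1[simp]: "cst 1 = 1" by (simp add: cst_def)
lemma cst_add: "cst (a + b) = cst a + cst b" by (simp add: cst_def single_add)
lemma cst_mult: "cst (a * b) = cst a * cst b" by (simp add: cst_def mult_single)
lemma cst_uminus: "cst (- a) = - cst a" by (simp add: cst_def single_uminus)
lemma cst_sg: "cst c * Poly_Mapping.single m d = Poly_Mapping.single m (c * d)" by (simp add: cst_def mult_single)

lemma cpoly_expand: "f = (\<Sum>m\<in>ks f. sg m (lk f m))"
  by (rule poly_mapping_eqI)
     (auto simp: lookup_sum lookup_single when_def in_keys_iff sum.delta'
       intro: sym)

lemma cpoly_induct [case_names zero add]:
  assumes "P 0" and "\<And>m c f. P f \<Longrightarrow> P (sg m c + f)"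
  shows "P f"
proof -
  have "P (\<Sum>m\<in>A. sg m (g m))" if "finite A" for A and g :: "mono \<Rightarrow> complex"
    using that by (induction A rule: finite_induct) (auto intro: assms)
  then show ?thesis by (subst cpoly_expand) simp
qed

lemma add_ext:
  fixes F G :: "cpoly \<Rightarrow> 'b::comm_monoid_add"
  assumes "\<And>x y. F (x + y) = F x + F y" "\<And>x y. G (x + y) = G x + G y"
    "\<And>m c. F (sg m c) = G (sg m c)"
  shows "F f = G f"
proof (induction f rule: cpoly_induct)
  case zero
  then show ?case using assms(3)[of undefined 0] by simp
next
  case (add m c f)
  then show ?case by (simp add: assms)
qed

definition linop :: "(mono \<Rightarrow> mono) \<Rightarrow> (mono \<Rightarrow> complex) \<Rightarrow> cpoly \<Rightarrow> cpoly" where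
  "linop \<sigma> w f = (\<Sum>m\<in>ks f. sg (\<sigma> m) (w m * lk f m))"

lemma linop_superset:
  assumes "finite S" "ks f \<subseteq> S"
  shows "linop \<sigma> w f = (\<Sum>m\<in>S. sg (\<sigma> m) (w m * lk f m))"
  unfolding linop_def
  by (rule sum.mono_neutral_left) (use assms in \<open>auto simp: in_keys_iff\<close>)

lemma linop_add: "linop \<sigma> w (f + g) = linop \<sigma> w f + linop \<sigma> w g"
proof -
  let ?S = "ks f \<union> ks g"
  have "linop \<sigma> w (f + g) = (\<Sum>m\<in>?S. sg (\<sigma> m) (w m * lk (f+g) m))"
    by (rule linop_superset) (auto simp: keys_add)
  also have "\<dots> = (\<Sum>m\<in>?S. sg (\<sigma> m) (w m * lk f m)) + (\<Sum>m\<in>?S. sg (\<sigma> m) (w m * lk g m))"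
    by (simp add: lookup_add distrib_left single_add sum.distrib)
  also have "\<dots> = linop \<sigma> w f + linop \<sigma> w g"
    by (simp add: linop_superset[symmetric])
  finally show ?thesis .
qed

lemma linop_single: "linop \<sigma> w (sg m c) = sg (\<sigma> m) (w m * c)"
  by (cases "c = 0") (simp_all add: linop_def)

lemma linop_zero: "linop \<sigma> w 0 = 0"
  by (simp add: linop_def)

lemma dz_linop: "dz j = linop (\<lambda>m. (fst m - e1 j, snd m)) (\<lambda>m. of_nat (Poly_Mapping.lookup (fst m) j))"
  by (rule ext) (simp add: dz_def linop_def)
lemma dzb_linop: "dzb j = linop (\<lambda>m. (fst m, snd m - e1 j)) (\<lambda>m. of_nat (Poly_Mapping.lookup (snd m) j))"
  by (rule ext) (simp add: dzb_def linop_def)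
lemma compconj_linop: "compconj = linop (\<lambda>m. (snd m, fst m)) (\<lambda>m. 1)"
  by (rule ext) (simp add: compconj_def linop_def)

lemma dz_add: "dz j (f + g) = dz j f + dz j g" by (simp add: dz_linop linop_add)
lemma dzb_add: "dzb j (f + g) = dzb j f + dzb j g" by (simp add: dzb_linop linop_add)
lemma compconj_add: "compconj (f + g) = compconj f + compconj g" by (simp add: compconj_linop linop_add)
lemma dz_zero[simp]: "dz j 0 = 0" by (simp add: dz_linop linop_zero)
lemma dzb_zero[simp]: "dzb j 0 = 0" by (simp add: dzb_linop linop_zero)
lemma compconj_zero[simp]: "compconj 0 = 0" by (simp add: compconj_linop linop_zero)

lemma dz_single: "dz j (sg (a,b) c) = sg (a - e1 j, b) (of_nat (Poly_Mapping.lookup a j) * c)"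
  by (simp add: dz_linop linop_single)
lemma dzb_single: "dzb j (sg (a,b) c) = sg (a, b - e1 j) (of_nat (Poly_Mapping.lookup b j) * c)"
  by (simp add: dzb_linop linop_single)
lemma compconj_single: "compconj (sg (a,b) c) = sg (b,a) c"
  by (simp add: compconj_linop linop_single)

lemma pconj_superset:
  assumes "finite S" "ks f \<subseteq> S"
  shows "pconj f = (\<Sum>m\<in>S. sg (snd m, fst m) (cnj (lk f m)))"
  unfolding pconj_def
  by (rule sum.mono_neutral_left) (use assms in \<open>auto simp: in_keys_iff\<close>)

lemma pconj_add: "pconj (f + g) = pconj f + pconj g"
proof -
  let ?S = "ks f \<union> ks g"
  have "pconj (f + g) = (\<Sum>m\<in>?S. sg (snd m, fst m) (cnj (lk (f+g) m)))"
    by (rule pconj_superset) (auto simp: keys_add)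
  also have "\<dots> = (\<Sum>m\<in>?S. sg (snd m, fst m) (cnj (lk f m))) + (\<Sum>m\<in>?S. sg (snd m, fst m) (cnj (lk g m)))"
    by (simp add: lookup_add single_add sum.distrib)
  also have "\<dots> = pconj f + pconj g"
    by (simp add: pconj_superset[symmetric])
  finally show ?thesis .
qed

lemma pconj_single: "pconj (sg (a,b) c) = sg (b,a) (cnj c)"
  by (cases "c = 0") (simp_all add: pconj_def)
lemma pconj_zero[simp]: "pconj 0 = 0" by (simp add: pconj_def)

lemma sg0: "sg (0,0) c = cst c" by (simp add: zero_prod_def cst_def)

lemma sg_mult: "sg (a,b) c * sg (a',b') c' = sg (a+a', b+b') (c * c')"
  by (simp add: mult_single)

lemma bilin_ext:
  fixes F G :: "cpoly \<Rightarrow> cpoly \<Rightarrow> 'b::comm_monoid_add"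
  assumes "\<And>x y g. F (x + y) g = F x g + F y g" "\<And>x y g. G (x + y) g = G x g + G y g"
   "\<And>x y f. F f (x + y) = F f x + F f y" "\<And>x y f. G f (x + y) = G f x + G f y"
    "\<And>a b c a' b' c'. F (sg (a,b) c) (sg (a',b') c') = G (sg (a,b) c) (sg (a',b') c')"
  shows "F f g = G f g"
proof (rule add_ext[where F="\<lambda>f. F f g" and G="\<lambda>f. G f g"])
  fix m :: mono and c :: complex
  obtain a b where m: "m = (a,b)" by (cases m)
  show "F (sg m c) g = G (sg m c) g"
    unfolding m
  proof (rule add_ext[where F="\<lambda>g. F (sg (a,b) c) g" and G="\<lambda>g. G (sg (a,b) c) g"])
    fix m' :: mono and c' :: complex
    obtain a' b' where "m' = (a',b')" by (cases m')
    then show "F (sg (a,b) c) (sg m' c') = G (sg (a,b) c) (sg m' c')" using assms(5) by simp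
  qed (use assms in auto)
qed (use assms in auto)

lemma pm_sub_add_l: "0 < Poly_Mapping.lookup a j \<Longrightarrow> a - Poly_Mapping.single j (Suc 0) + a' = a + a' - Poly_Mapping.single j (Suc 0)"
  by (rule poly_mapping_eqI) (auto simp add: lookup_add lookup_minus lookup_single when_def)
lemma pm_sub_add_r: "0 < Poly_Mapping.lookup a' j \<Longrightarrow> a + (a' - Poly_Mapping.single j (Suc 0)) = a + a' - Poly_Mapping.single j (Suc 0)"
  by (rule poly_mapping_eqI) (auto simp add: lookup_add lookup_minus lookup_single when_def)

lemma dz_mult: "dz j (f * g) = dz j f * g + f * dz j g"
proof (rule bilin_ext[where F="\<lambda>f g. dz j (f * g)" and G="\<lambda>f g. dz j f * g + f * dz j g"])
  fix a b c a' b' c'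
  show "dz j (sg (a, b) c * sg (a', b') c') =
         dz j (sg (a, b) c) * sg (a', b') c' + sg (a, b) c * dz j (sg (a', b') c')"
    apply (cases "Poly_Mapping.lookup a j = 0"; cases "Poly_Mapping.lookup a' j = 0")
    apply (simp_all add: sg_mult dz_single lookup_add pm_sub_add_l pm_sub_add_r flip: single_add)
    apply (simp_all add: algebra_simps)
    done
qed (simp_all add: dz_add algebra_simps)

lemma dzb_mult: "dzb j (f * g) = dzb j f * g + f * dzb j g"
proof (rule bilin_ext[where F="\<lambda>f g. dzb j (f * g)" and G="\<lambda>f g. dzb j f * g + f * dzb j g"])
  fix a b c a' b' c'
  show "dzb j (sg (a, b) c * sg (a', b') c') =
         dzb j (sg (a, b) c) * sg (a', b') c' + sg (a, b) c * dzb j (sg (a', b') c')"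
    apply (cases "Poly_Mapping.lookup b j = 0"; cases "Poly_Mapping.lookup b' j = 0")
    apply (simp_all add: sg_mult dzb_single lookup_add pm_sub_add_l pm_sub_add_r flip: single_add)
    apply (simp_all add: algebra_simps)
    done
qed (simp_all add: dzb_add algebra_simps)

lemma compconj_mult: "compconj (f * g) = compconj f * compconj g"
  by (rule bilin_ext[where F="\<lambda>f g. compconj (f * g)" and G="\<lambda>f g. compconj f * compconj g"])
    (simp_all add: compconj_add algebra_simps sg_mult compconj_single)

lemma pconj_mult: "pconj (f * g) = pconj f * pconj g"
  by (rule bilin_ext[where F="\<lambda>f g. pconj (f * g)" and G="\<lambda>f g. pconj f * pconj g"])
    (simp_all add: pconj_add algebra_simps sg_mult pconj_single)

definition zv :: "nat \<Rightarrow> cpoly" where "zv k = sg (e1 k, 0) 1"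
definition zbv :: "nat \<Rightarrow> cpoly" where "zbv k = sg (0, e1 k) 1"


lemma dz_cst[simp]: "dz j (cst c) = 0"
  using dz_single[of j 0 0 c] by (simp add: sg0)
lemma dzb_cst[simp]: "dzb j (cst c) = 0"
  using dzb_single[of j 0 0 c] by (simp add: sg0)
lemma dz_one[simp]: "dz j 1 = 0"
  using dz_cst[of j 1] by simp
lemma dzb_one[simp]: "dzb j 1 = 0"
  using dzb_cst[of j 1] by simp
lemma dz_zv: "dz j (zv k) = (if j = k then 1 else 0)"
  by (simp add: zv_def dz_single lookup_single when_def sg0 cst_def)
lemma dzb_zbv: "dzb j (zbv k) = (if j = k then 1 else 0)"
  by (simp add: zbv_def dzb_single lookup_single when_def sg0 cst_def)
lemma dz_zbv[simp]: "dz j (zbv k) = 0"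
  by (simp add: zbv_def dz_single)
lemma dzb_zv[simp]: "dzb j (zv k) = 0"
  by (simp add: zv_def dzb_single)

lemma dz_cst_mult: "dz j (cst c * f) = cst c * dz j f" by (simp add: dz_mult)
lemma dzb_cst_mult: "dzb j (cst c * f) = cst c * dzb j f" by (simp add: dzb_mult)

lemma compconj_cst[simp]: "compconj (cst c) = cst c"
  using compconj_single[of 0 0 c] by (simp add: sg0)
lemma compconj_zv: "compconj (zv k) = zbv k" by (simp add: zv_def zbv_def compconj_single)
lemma compconj_zbv: "compconj (zbv k) = zv k" by (simp add: zv_def zbv_def compconj_single)
lemma pconj_cst: "pconj (cst c) = cst (cnj c)"
  using pconj_single[of 0 0 c] by (simp add: sg0)
lemma pconj_zv: "pconj (zv k) = zbv k" by (simp add: zv_def zbv_def pconj_single)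
lemma pconj_zbv: "pconj (zbv k) = zv k" by (simp add: zv_def zbv_def pconj_single)

lemma pm_minus_comm: "(a::nat\<Rightarrow>\<^sub>0nat) - Poly_Mapping.single i v - Poly_Mapping.single j w = a - Poly_Mapping.single j w - Poly_Mapping.single i v"
  by (rule poly_mapping_eqI) (simp add: lookup_minus lookup_single when_def)

lemma dz_dz_comm: "dz i (dz j f) = dz j (dz i f)"
  by (rule add_ext[where F="\<lambda>f. dz i (dz j f)" and G="\<lambda>f. dz j (dz i f)"])
     (auto simp: dz_add dz_single lookup_minus lookup_single when_def mult_ac intro!: arg_cong2[where f=sg] pm_minus_comm)
lemma dzb_dzb_comm: "dzb i (dzb j f) = dzb j (dzb i f)"
  by (rule add_ext[where F="\<lambda>f. dzb i (dzb j f)" and G="\<lambda>f. dzb j (dzb i f)"])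
     (auto simp: dzb_add dzb_single lookup_minus lookup_single when_def mult_ac intro!: arg_cong2[where f=sg] pm_minus_comm)
lemma dz_dzb_comm: "dz i (dzb j f) = dzb j (dz i f)"
  by (rule add_ext[where F="\<lambda>f. dz i (dzb j f)" and G="\<lambda>f. dzb j (dz i f)"])
     (auto simp: dz_add dzb_add dz_single dzb_single mult_ac)

lemma compconj_dz: "compconj (dz j f) = dzb j (compconj f)"
  by (rule add_ext[where F="\<lambda>f. compconj (dz j f)" and G="\<lambda>f. dzb j (compconj f)"])
     (auto simp: dz_add dzb_add compconj_add dz_single dzb_single compconj_single)
lemma compconj_dzb: "compconj (dzb j f) = dz j (compconj f)"
  by (rule add_ext[where F="\<lambda>f. compconj (dzb j f)" and G="\<lambda>f. dz j (compconj f)"])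
     (auto simp: dz_add dzb_add compconj_add dz_single dzb_single compconj_single)
lemma compconj_compconj[simp]: "compconj (compconj f) = f"
  by (rule add_ext[where F="\<lambda>f. compconj (compconj f)" and G="\<lambda>f. f"])
     (auto simp: compconj_add compconj_single)
lemma pconj_dz: "pconj (dz j f) = dzb j (pconj f)"
  by (rule add_ext[where F="\<lambda>f. pconj (dz j f)" and G="\<lambda>f. dzb j (pconj f)"])
     (auto simp: dz_add dzb_add pconj_add dz_single dzb_single pconj_single)
lemma pconj_dzb: "pconj (dzb j f) = dz j (pconj f)"
  by (rule add_ext[where F="\<lambda>f. pconj (dzb j f)" and G="\<lambda>f. dz j (pconj f)"])
     (auto simp: dz_add dzb_add pconj_add dz_single dzb_single pconj_single)
lemma pconj_compconj: "pconj (compconj f) = compconj (pconj f)"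
  by (rule add_ext[where F="\<lambda>f. pconj (compconj f)" and G="\<lambda>f. compconj (pconj f)"])
     (auto simp: compconj_add pconj_add compconj_single pconj_single)



lemma dz_zv_mult: "dz j (zv k * f) = (if j = k then f else 0) + zv k * dz j f"
  by (simp add: dz_mult dz_zv)
lemma dzb_zbv_mult: "dzb j (zbv k * f) = (if j = k then f else 0) + zbv k * dzb j f"
  by (simp add: dzb_mult dzb_zbv)
lemma dz_zbv_mult: "dz j (zbv k * f) = zbv k * dz j f"
  by (simp add: dz_mult)
lemma dzb_zv_mult: "dzb j (zv k * f) = zv k * dzb j f"
  by (simp add: dzb_mult)

definition DK :: "(nat \<Rightarrow> cpoly \<Rightarrow> cpoly) \<Rightarrow> (nat \<Rightarrow>\<^sub>0 nat) \<Rightarrow> cpoly \<Rightarrow> cpoly" where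
  "DK d K f = fold (\<lambda>j g. (d j ^^ Poly_Mapping.lookup K j) g) (sorted_list_of_set (Poly_Mapping.keys K)) f"

lemma dzK_DK: "dzK = DK dz" by (intro ext) (simp add: dzK_def DK_def)
lemma dzbK_DK: "dzbK = DK dzb" by (intro ext) (simp add: dzbK_def DK_def)

definition dcomm :: "(nat \<Rightarrow> cpoly \<Rightarrow> cpoly) \<Rightarrow> bool" where
  "dcomm d \<longleftrightarrow> (\<forall>i j f. d i (d j f) = d j (d i f))"

lemma dcomm_dz: "dcomm dz" by (simp add: dcomm_def dz_dz_comm)
lemma dcomm_dzb: "dcomm dzb" by (simp add: dcomm_def dzb_dzb_comm)

lemma dcomm_cfc: "dcomm d \<Longrightarrow> comp_fun_commute (\<lambda>j. d j ^^ \<phi> j)"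
proof -
  assume "dcomm d"
  then have "comp_fun_commute d" unfolding comp_fun_commute_def dcomm_def by (auto simp: fun_eq_iff)
  then show ?thesis by (rule comp_fun_commute.comp_fun_commute_funpow)
qed

lemma DK_fold: assumes "dcomm d"
  shows "DK d K f = Finite_Set.fold (\<lambda>j. d j ^^ Poly_Mapping.lookup K j) f (Poly_Mapping.keys K)"
proof -
  interpret comp_fun_commute "\<lambda>j. d j ^^ Poly_Mapping.lookup K j" using dcomm_cfc[OF assms] .
  have "Finite_Set.fold (\<lambda>j. d j ^^ Poly_Mapping.lookup K j) f (set (sorted_list_of_set (Poly_Mapping.keys K)))
     = fold (\<lambda>j. d j ^^ Poly_Mapping.lookup K j) (remdups (sorted_list_of_set (Poly_Mapping.keys K))) f"
    by (rule fold_set_fold_remdups)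
  then show ?thesis by (simp add: DK_def distinct_remdups_id)
qed

lemma DK_zero[simp]: "DK d 0 f = f" by (simp add: DK_def)

lemma DK_split: assumes "dcomm d"
  shows "DK d K f = (d k ^^ Poly_Mapping.lookup K k)
     (Finite_Set.fold (\<lambda>j. d j ^^ Poly_Mapping.lookup K j) f (Poly_Mapping.keys K - {k}))"
proof -
  interpret comp_fun_commute "\<lambda>j. d j ^^ Poly_Mapping.lookup K j" using dcomm_cfc[OF assms] .
  show ?thesis
  proof (cases "k \<in> Poly_Mapping.keys K")
    case True
    then have "Poly_Mapping.keys K = insert k (Poly_Mapping.keys K - {k})" by auto
    moreover have "Finite_Set.fold (\<lambda>j. d j ^^ Poly_Mapping.lookup K j) f (insert k (Poly_Mapping.keys K - {k}))
      = (d k ^^ Poly_Mapping.lookup K k) (Finite_Set.fold (\<lambda>j. d j ^^ Poly_Mapping.lookup K j) f (Poly_Mapping.keys K - {k}))"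
      by (rule fold_insert) auto
    ultimately show ?thesis unfolding DK_fold[OF assms] by simp
  next
    case False
    then show ?thesis unfolding DK_fold[OF assms] by (simp add: in_keys_iff)
  qed
qed

lemma DK_add1: assumes "dcomm d"
  shows "DK d (K + e1 k) f = d k (DK d K f)"
proof -
  let ?K' = "K + e1 k"
  let ?A = "Poly_Mapping.keys K - {k}"
  have keq: "Poly_Mapping.keys ?K' - {k} = ?A"
    by (auto simp: in_keys_iff lookup_add lookup_single when_def)
  have "Finite_Set.fold (\<lambda>j. d j ^^ Poly_Mapping.lookup ?K' j) f ?A
      = Finite_Set.fold (\<lambda>j. d j ^^ Poly_Mapping.lookup K j) f ?A"
    by (rule Finite_Set.fold_cong[where S=UNIV])
       (use dcomm_cfc[OF assms] in \<open>auto simp: comp_fun_commute_def' lookup_add lookup_single when_def\<close>)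
  then show ?thesis
    using DK_split[OF assms, of ?K' f k] DK_split[OF assms, of K f k] keq
    by (simp add: lookup_add)
qed

lemma mabs_superset: "finite S \<Longrightarrow> Poly_Mapping.keys K \<subseteq> S \<Longrightarrow> mabs K = (\<Sum>j\<in>S. Poly_Mapping.lookup K j)"
  unfolding mabs_def by (rule sum.mono_neutral_left) (auto simp: in_keys_iff)

lemma mfact_superset: "finite S \<Longrightarrow> Poly_Mapping.keys K \<subseteq> S \<Longrightarrow> mfact K = (\<Prod>j\<in>S. fact (Poly_Mapping.lookup K j))"
  unfolding mfact_def by (rule prod.mono_neutral_left) (auto simp: in_keys_iff)

lemma mabs_zero[simp]: "mabs 0 = 0" by (simp add: mabs_def)
lemma mfact_zero[simp]: "mfact 0 = 1" by (simp add: mfact_def)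

lemma mabs_add1: "mabs (K + e1 k) = mabs K + 1"
proof -
  let ?S = "insert k (Poly_Mapping.keys K)"
  have "mabs (K + e1 k) = (\<Sum>j\<in>?S. Poly_Mapping.lookup K j + (if j = k then 1 else 0))"
    by (subst mabs_superset[of ?S]) (auto simp: lookup_add lookup_single when_def keys_add intro: sum.cong
      dest: subsetD[OF keys_add])
  also have "\<dots> = (\<Sum>j\<in>?S. Poly_Mapping.lookup K j) + 1"
    by (simp add: sum.distrib)
  also have "(\<Sum>j\<in>?S. Poly_Mapping.lookup K j) = mabs K"
    by (rule mabs_superset[symmetric]) auto
  finally show ?thesis .
qed

lemma mfact_add1: "mfact (K + e1 k) = mfact K * (Poly_Mapping.lookup K k + 1)"
proof -
  let ?S = "insert k (Poly_Mapping.keys K)"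
  have "mfact (K + e1 k) = (\<Prod>j\<in>?S. fact (Poly_Mapping.lookup K j + (if j = k then 1 else 0)))"
    by (subst mfact_superset[of ?S]) (auto simp: lookup_add lookup_single when_def intro: prod.cong
      dest: subsetD[OF keys_add])
  also have "\<dots> = fact (Poly_Mapping.lookup K k + 1) * (\<Prod>j\<in>?S - {k}. fact (Poly_Mapping.lookup K j))"
    by (subst prod.remove[of _ k]) (auto intro!: prod.cong)
  also have "\<dots> = (Poly_Mapping.lookup K k + 1) * (fact (Poly_Mapping.lookup K k) * (\<Prod>j\<in>?S - {k}. fact (Poly_Mapping.lookup K j)))"
    by (simp add: algebra_simps)
  also have "fact (Poly_Mapping.lookup K k) * (\<Prod>j\<in>?S - {k}. fact (Poly_Mapping.lookup K j)) = mfact K"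
    by (subst mfact_superset[of ?S]) (auto simp: prod.remove[of ?S k])
  finally show ?thesis by (simp add: algebra_simps)
qed

lemma mfact_pos: "mfact K > 0" by (simp add: mfact_def)

lemma pm_sub_add1: "0 < Poly_Mapping.lookup K k \<Longrightarrow> K - e1 k + e1 k = K"
  by (rule poly_mapping_eqI) (auto simp: lookup_add lookup_minus lookup_single when_def)

lemma pm_induct[case_names zero add1]:
  assumes "P 0" "\<And>K k. P K \<Longrightarrow> P (K + e1 k)"
  shows "P K"
proof (induction "mabs K" arbitrary: K)
  case 0
  then have "K = 0"
    by (auto simp: mabs_def in_keys_iff intro!: poly_mapping_eqI)
  then show ?case using assms by simp
next
  case (Suc n)
  then have "K \<noteq> 0" by auto
  then obtain k where k: "k \<in> Poly_Mapping.keys K" by (metis keys_eq_empty ex_in_conv)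
  then have kk: "0 < Poly_Mapping.lookup K k" by (simp add: in_keys_iff)
  have "mabs (K - e1 k) = n" using mabs_add1[of "K - e1 k" k] pm_sub_add1[OF kk] Suc by simp
  then have "P (K - e1 k)" using Suc by simp
  then have "P (K - e1 k + e1 k)" by (rule assms)
  then show ?case using pm_sub_add1[OF kk] by simp
qed




lemma DK_commute:
  assumes "dcomm d" "\<And>j f. Q (d j f) = d j (Q f)"
  shows "Q (DK d K f) = DK d K (Q f)"
  by (induction K rule: pm_induct) (simp_all add: DK_add1[OF assms(1)] assms(2))

lemma DK_add:
  assumes "dcomm d" "\<And>j f g. d j (f + g) = d j f + d j g"
  shows "DK d K (f + g) = DK d K f + DK d K g"
  by (induction K rule: pm_induct) (simp_all add: DK_add1[OF assms(1)] assms(2))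

lemma dzK_add1: "dzK (K + e1 k) f = dz k (dzK K f)"
  by (simp add: dzK_DK DK_add1[OF dcomm_dz])
lemma dzbK_add1: "dzbK (K + e1 k) f = dzb k (dzbK K f)"
  by (simp add: dzbK_DK DK_add1[OF dcomm_dzb])
lemma dzK_zero[simp]: "dzK 0 f = f" by (simp add: dzK_DK)
lemma dzbK_zero[simp]: "dzbK 0 f = f" by (simp add: dzbK_DK)

lemma dzK_add: "dzK K (f + g) = dzK K f + dzK K g"
  by (simp add: dzK_DK DK_add[OF dcomm_dz] dz_add)
lemma dzbK_add: "dzbK K (f + g) = dzbK K f + dzbK K g"
  by (simp add: dzbK_DK DK_add[OF dcomm_dzb] dzb_add)
lemma dzK_0[simp]: "dzK K 0 = 0"
  using dzK_add[of K 0 0] by simp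
lemma dzbK_0[simp]: "dzbK K 0 = 0"
  using dzbK_add[of K 0 0] by simp

lemma dzK_cst_mult: "dzK K (cst c * f) = cst c * dzK K f"
  unfolding dzK_DK by (rule DK_commute[OF dcomm_dz, symmetric]) (simp add: dz_cst_mult)
lemma dzbK_cst_mult: "dzbK K (cst c * f) = cst c * dzbK K f"
  unfolding dzbK_DK by (rule DK_commute[OF dcomm_dzb, symmetric]) (simp add: dzb_cst_mult)
lemma dzK_zbv_mult: "dzK K (zbv k * f) = zbv k * dzK K f"
  unfolding dzK_DK by (rule DK_commute[OF dcomm_dz, symmetric]) (simp add: dz_zbv_mult)
lemma dzbK_zv_mult: "dzbK K (zv k * f) = zv k * dzbK K f"
  unfolding dzbK_DK by (rule DK_commute[OF dcomm_dzb, symmetric]) (simp add: dzb_zv_mult)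
lemma dz_dzK: "dz i (dzK K f) = dzK K (dz i f)"
  unfolding dzK_DK by (rule DK_commute[OF dcomm_dz]) (simp add: dz_dz_comm)
lemma dzb_dzK: "dzb i (dzK K f) = dzK K (dzb i f)"
  unfolding dzK_DK by (rule DK_commute[OF dcomm_dz]) (simp add: dz_dzb_comm)
lemma dz_dzbK: "dz i (dzbK K f) = dzbK K (dz i f)"
  unfolding dzbK_DK by (rule DK_commute[OF dcomm_dzb]) (simp add: dz_dzb_comm)
lemma dzb_dzbK: "dzb i (dzbK K f) = dzbK K (dzb i f)"
  unfolding dzbK_DK by (rule DK_commute[OF dcomm_dzb]) (simp add: dzb_dzb_comm)

lemma dzbK_add1': "dzbK (K + e1 k) f = dzbK K (dzb k f)"
  by (simp add: dzbK_add1 dzb_dzbK)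

lemma dzK_cst: "dzK K (cst c) = (if K = 0 then cst c else 0)"
proof (induction K rule: pm_induct)
  case (add1 K k)
  have "Poly_Mapping.lookup (K + e1 k) k \<noteq> 0" by (simp add: lookup_add)
  then have "K + e1 k \<noteq> 0" by auto
  then show ?case using add1 by (simp add: dzK_add1)
qed simp

lemma pm_lookup_add1: "Poly_Mapping.lookup (K + e1 j) k = Poly_Mapping.lookup K k + (if j = k then 1 else 0)"
  by (simp add: lookup_add lookup_single when_def)

lemma pm_swap_sub: "j \<noteq> k \<Longrightarrow> 0 < Poly_Mapping.lookup K k \<Longrightarrow> K + e1 j - e1 k = K - e1 k + e1 j"
  by (rule poly_mapping_eqI) (auto simp: lookup_add lookup_minus lookup_single when_def)

lemma pm_add_sub_same: "K + e1 k - e1 k = K"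
  by (rule poly_mapping_eqI) (auto simp: lookup_add lookup_minus lookup_single when_def)

lemma dzK_zv_mult:
  "dzK K (zv k * g) = zv k * dzK K g + cst (of_nat (Poly_Mapping.lookup K k)) * dzK (K - e1 k) g"
proof (induction K rule: pm_induct)
  case zero
  then show ?case by simp
next
  case (add1 K j)
  have "dzK (K + e1 j) (zv k * g) = dz j (zv k * dzK K g + cst (of_nat (Poly_Mapping.lookup K k)) * dzK (K - e1 k) g)"
    by (simp add: dzK_add1 add1)
  also have "\<dots> = (if j = k then dzK K g else 0) + zv k * dz j (dzK K g)
      + cst (of_nat (Poly_Mapping.lookup K k)) * dz j (dzK (K - e1 k) g)"
    by (simp add: dz_add dz_zv_mult dz_cst_mult)
  also have "\<dots> = zv k * dzK (K + e1 j) g + cst (of_nat (Poly_Mapping.lookup (K + e1 j) k)) * dzK (K + e1 j - e1 k) g"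
  proof (cases "Poly_Mapping.lookup K k = 0")
    case True
    then show ?thesis
      by (cases "j = k") (simp_all add: dzK_add1 pm_lookup_add1 pm_add_sub_same)
  next
    case False
    then have pos: "0 < Poly_Mapping.lookup K k" by simp
    show ?thesis
    proof (cases "j = k")
      case True
      have "dz k (dzK (K - e1 k) g) = dzK K g" using dzK_add1[of "K - e1 k" k g] pm_sub_add1[OF pos] by simp
      then show ?thesis using True
        by (simp add: dzK_add1 pm_lookup_add1 pm_add_sub_same cst_add algebra_simps)
    next
      case False
      then show ?thesis using pm_swap_sub[OF False pos]
        by (simp add: dzK_add1 pm_lookup_add1)
    qed
  qed
  finally show ?case .
qed

lemma pm_sub_sub: "(a::nat\<Rightarrow>\<^sub>0nat) - K - e1 k = a - (K + e1 k)"
  by (rule poly_mapping_eqI) (simp add: lookup_add lookup_minus)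

lemma dzK_single_shape:
  "\<exists>x. dzK K (sg (a,b) c) = sg (a - K, b) x \<and> (x \<noteq> 0 \<longrightarrow> (\<forall>j. Poly_Mapping.lookup K j \<le> Poly_Mapping.lookup a j))"
proof (induction K rule: pm_induct)
  case zero
  then show ?case by auto
next
  case (add1 K k)
  then obtain x where x: "dzK K (sg (a,b) c) = sg (a - K, b) x"
    and xn: "x \<noteq> 0 \<longrightarrow> (\<forall>j. Poly_Mapping.lookup K j \<le> Poly_Mapping.lookup a j)" by blast
  let ?y = "of_nat (Poly_Mapping.lookup (a - K) k) * x"
  have "dzK (K + e1 k) (sg (a,b) c) = sg (a - (K + e1 k), b) ?y"
    by (simp add: dzK_add1 x dz_single pm_sub_sub)
  moreover have "?y \<noteq> 0 \<longrightarrow> (\<forall>j. Poly_Mapping.lookup (K + e1 k) j \<le> Poly_Mapping.lookup a j)"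
    using xn by (auto simp: lookup_minus pm_lookup_add1)
  ultimately show ?case by blast
qed

lemma dzK_sum: "dzK K (\<Sum>m\<in>A. F m) = (\<Sum>m\<in>A. dzK K (F m))"
  by (induction A rule: infinite_finite_induct) (simp_all add: dzK_add)

lemma dzK_nonzero:
  assumes "dzK K g \<noteq> 0"
  shows "\<exists>m\<in>Poly_Mapping.keys g. \<forall>j. Poly_Mapping.lookup K j \<le> Poly_Mapping.lookup (fst m) j"
proof (rule ccontr)
  assume nex: "\<not> ?thesis"
  have "dzK K g = (\<Sum>m\<in>Poly_Mapping.keys g. dzK K (sg m (lk g m)))"
    by (subst cpoly_expand) (simp add: dzK_sum)
  also have "\<dots> = 0"
  proof (rule sum.neutral, rule ballI)
    fix m assume m: "m \<in> Poly_Mapping.keys g"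
    obtain a b where ab: "m = (a,b)" by (cases m)
    obtain x where x: "dzK K (sg (a,b) (lk g m)) = sg (a - K, b) x"
      and xn: "x \<noteq> 0 \<longrightarrow> (\<forall>j. Poly_Mapping.lookup K j \<le> Poly_Mapping.lookup a j)"
      using dzK_single_shape by blast
    have "x = 0" using xn nex m ab by auto
    then show "dzK K (sg m (lk g m)) = 0" using x ab by simp
  qed
  finally show False using assms by simp
qed

lemma finite_le_pm: "finite {K::nat\<Rightarrow>\<^sub>0nat. \<forall>j. Poly_Mapping.lookup K j \<le> Poly_Mapping.lookup a j}"
proof -
  let ?S = "{K::nat\<Rightarrow>\<^sub>0nat. \<forall>j. Poly_Mapping.lookup K j \<le> Poly_Mapping.lookup a j}"
  let ?h = "\<lambda>K::nat\<Rightarrow>\<^sub>0nat. restrict (Poly_Mapping.lookup K) (Poly_Mapping.keys a)"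
  have "inj_on ?h ?S"
  proof (rule inj_onI)
    fix K K' assume K: "K \<in> ?S" and K': "K' \<in> ?S" and eq: "?h K = ?h K'"
    show "K = K'"
    proof (rule poly_mapping_eqI)
      fix j
      show "Poly_Mapping.lookup K j = Poly_Mapping.lookup K' j"
      proof (cases "j \<in> Poly_Mapping.keys a")
        case True
        have "restrict (Poly_Mapping.lookup K) (Poly_Mapping.keys a) j = restrict (Poly_Mapping.lookup K') (Poly_Mapping.keys a) j" using eq by simp
        then show ?thesis using True by simp
      next
        case False
        have "Poly_Mapping.lookup K j \<le> Poly_Mapping.lookup a j" "Poly_Mapping.lookup K' j \<le> Poly_Mapping.lookup a j"
          using K K' by blast+
        moreover have "Poly_Mapping.lookup a j = 0" using False by (simp add: in_keys_iff)
        ultimately show ?thesis by simp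
      qed
    qed
  qed
  moreover have "?h ` ?S \<subseteq> PiE (Poly_Mapping.keys a) (\<lambda>j. {..Poly_Mapping.lookup a j})"
    by auto
  moreover have "finite (PiE (Poly_Mapping.keys a) (\<lambda>j. {..Poly_Mapping.lookup a j}))"
    by (rule finite_PiE) auto
  ultimately show ?thesis using finite_imageD finite_subset by blast
qed

lemma finite_dzK: "finite {K. dzK K g \<noteq> 0}"
proof (rule finite_subset)
  show "{K. dzK K g \<noteq> 0} \<subseteq> (\<Union>m\<in>Poly_Mapping.keys g. {K. \<forall>j. Poly_Mapping.lookup K j \<le> Poly_Mapping.lookup (fst m) j})"
    using dzK_nonzero by blast
  show "finite (\<Union>m\<in>Poly_Mapping.keys g. {K. \<forall>j. Poly_Mapping.lookup K j \<le> Poly_Mapping.lookup (fst m) j})"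
    by (rule finite_UN_I) (simp_all add: finite_le_pm)
qed



lemma SA_add:
  fixes F G :: "'a \<Rightarrow> cpoly"
  assumes "finite {a. F a \<noteq> 0}" "finite {a. G a \<noteq> 0}"
  shows "Sum_any (\<lambda>a. F a + G a) = Sum_any F + Sum_any G"
  using Sum_any.distrib[OF assms] .

lemma SA_lin:
  fixes F :: "'a \<Rightarrow> cpoly" and L :: "cpoly \<Rightarrow> cpoly"
  assumes fin: "finite {a. F a \<noteq> 0}" and add: "\<And>x y. L (x + y) = L x + L y" and z: "L 0 = 0"
  shows "L (Sum_any F) = Sum_any (\<lambda>a. L (F a))"
proof -
  let ?A = "{a. F a \<noteq> 0}"
  have "Sum_any F = sum F ?A" by (simp add: Sum_any.expand_set)
  moreover have "Sum_any (\<lambda>a. L (F a)) = sum (\<lambda>a. L (F a)) ?A"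
    by (rule Sum_any.expand_superset) (use fin z in auto)
  moreover have "L (sum F B) = sum (\<lambda>a. L (F a)) B" if "finite B" for B
    using that by (induction B rule: finite_induct) (simp_all add: z add)
  ultimately show ?thesis using fin by simp
qed

lemma SA_shift:
  fixes B :: "(nat \<Rightarrow>\<^sub>0 nat) \<Rightarrow> cpoly"
  assumes "\<And>K. Poly_Mapping.lookup K k = 0 \<Longrightarrow> B K = 0"
  shows "Sum_any B = Sum_any (\<lambda>K. B (K + e1 k))"
proof -
  let ?s = "\<lambda>K::nat\<Rightarrow>\<^sub>0nat. K + e1 k"
  have inj: "inj_on ?s X" for X by (rule inj_onI) simp
  have img: "{K. B K \<noteq> 0} = ?s ` {K. B (K + e1 k) \<noteq> 0}"
  proof (rule set_eqI, rule iffI)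
    fix K assume "K \<in> {K. B K \<noteq> 0}"
    then have BK: "B K \<noteq> 0" by simp
    then have "0 < Poly_Mapping.lookup K k" using assms by (metis neq0_conv)
    then have "K = ?s (K - e1 k)" using pm_sub_add1 by simp
    then show "K \<in> ?s ` {K. B (K + e1 k) \<noteq> 0}" using BK by (metis (mono_tags, lifting) image_eqI mem_Collect_eq)
  qed auto
  have "Sum_any B = sum B {K. B K \<noteq> 0}" by (simp add: Sum_any.expand_set)
  also have "\<dots> = sum (B \<circ> ?s) {K. B (K + e1 k) \<noteq> 0}"
    unfolding img by (rule sum.reindex[OF inj])
  also have "\<dots> = Sum_any (\<lambda>K. B (K + e1 k))" by (simp add: Sum_any.expand_set comp_def)
  finally show ?thesis .
qed

definition wc :: "real \<Rightarrow> (nat \<Rightarrow>\<^sub>0 nat) \<Rightarrow> complex" where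
  "wc s K = complex_of_real (s ^ mabs K / real (mfact K))"

lemma wick_term_wc: "wick_term s f g K = cst (wc s K) * (dzbK K f * dzK K g)"
  by (simp add: wick_term_def wc_def psmult_cst)

lemma wick_SA: "wick s f g = Sum_any (wick_term s f g)"
  by (simp add: wick_def Sum_any.expand_set)

lemma wc_zero[simp]: "wc s 0 = 1" by (simp add: wc_def)

lemma wc_add1: "wc s (K + e1 k) * of_nat (Poly_Mapping.lookup K k + 1) = complex_of_real s * wc s K"
proof -
  let ?L = "real (Poly_Mapping.lookup K k)"
  let ?M = "real (mfact K)"
  have eq: "real (mfact (K + e1 k)) = ?M * (?L + 1)"
    by (simp add: mfact_add1 algebra_simps)
  have M: "?M \<noteq> 0" using mfact_pos[of K] by simp
  have L: "?L + 1 \<noteq> 0" by (simp add: add_nonneg_eq_0_iff)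
  have "s ^ mabs (K + e1 k) / real (mfact (K + e1 k)) * (?L + 1) = s * (s ^ mabs K / ?M)"
  proof -
    have nz: "?M * (?L + 1) \<noteq> 0" using M L by simp
    then have nz2: "?M + ?M * ?L \<noteq> 0" by (simp add: algebra_simps)
    show ?thesis unfolding eq mabs_add1 using M L nz nz2 by (simp add: field_simps)
  qed
  then have "complex_of_real (s ^ mabs (K + e1 k) / real (mfact (K + e1 k))) * complex_of_real (?L + 1)
      = complex_of_real s * complex_of_real (s ^ mabs K / ?M)" by (metis of_real_mult)
  moreover have "complex_of_real (?L + 1) = of_nat (Poly_Mapping.lookup K k + 1)" by simp
  ultimately show ?thesis unfolding wc_def by metis
qed

lemma fin_wt: "finite {K. wick_term s f g K \<noteq> 0}"
  by (rule finite_subset[OF _ finite_dzK[of g]]) (auto simp: wick_term_wc)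

lemma wick_cst_right: "wick s f (cst c) = cst c * f"
proof -
  have "wick s f (cst c) = sum (wick_term s f (cst c)) {0}"
    unfolding wick_SA by (rule Sum_any.expand_superset) (auto simp: wick_term_wc dzK_cst split: if_splits)
  then show ?thesis by (simp add: wick_term_wc dzK_cst mult.commute)
qed

lemma wick_add_right: "wick s f (g1 + g2) = wick s f g1 + wick s f g2"
proof -
  have "wick s f (g1 + g2) = Sum_any (\<lambda>K. wick_term s f g1 K + wick_term s f g2 K)"
    unfolding wick_SA by (rule Sum_any.cong) (simp add: wick_term_wc dzK_add algebra_simps)
  also have "\<dots> = wick s f g1 + wick s f g2"
    unfolding wick_SA by (rule SA_add[OF fin_wt fin_wt])
  finally show ?thesis .
qed

lemma wick_cst_mult_right: "wick s f (cst c * g) = cst c * wick s f g"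
proof -
  have "wick s f (cst c * g) = Sum_any (\<lambda>K. cst c * wick_term s f g K)"
    unfolding wick_SA by (rule Sum_any.cong) (unfold wick_term_wc dzK_cst_mult, simp add: algebra_simps)
  also have "\<dots> = cst c * wick s f g"
    unfolding wick_SA by (rule SA_lin[OF fin_wt, symmetric]) (simp_all add: algebra_simps)
  finally show ?thesis .
qed

lemma wick_zbv_right: "wick s f (zbv k * g) = zbv k * wick s f g"
proof -
  have "wick s f (zbv k * g) = Sum_any (\<lambda>K. zbv k * wick_term s f g K)"
    unfolding wick_SA by (rule Sum_any.cong) (unfold wick_term_wc dzK_zbv_mult, simp add: algebra_simps)
  also have "\<dots> = zbv k * wick s f g"
    unfolding wick_SA by (rule SA_lin[OF fin_wt, symmetric]) (simp_all add: algebra_simps)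
  finally show ?thesis .
qed

lemma wick_zv_right: "wick s f (zv k * g) = zv k * wick s f g + cst (of_real s) * wick s (dzb k f) g"
proof -
  define B where "B K = cst (wc s K) * (cst (of_nat (Poly_Mapping.lookup K k)) * (dzbK K f * dzK (K - e1 k) g))" for K
  have finB: "finite {K. B K \<noteq> 0}"
  proof (rule finite_subset)
    show "{K. B K \<noteq> 0} \<subseteq> (\<lambda>K. K + e1 k) ` {K. dzK K g \<noteq> 0}"
    proof
      fix K assume "K \<in> {K. B K \<noteq> 0}"
      then have BK: "B K \<noteq> 0" by simp
      then have "Poly_Mapping.lookup K k \<noteq> 0" by (rule contrapos_nn) (simp add: B_def)
      then have "K = K - e1 k + e1 k" using pm_sub_add1 by simp
      moreover have "dzK (K - e1 k) g \<noteq> 0" using BK by (auto simp: B_def)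
      ultimately show "K \<in> (\<lambda>K. K + e1 k) ` {K. dzK K g \<noteq> 0}" by blast
    qed
    show "finite ((\<lambda>K. K + e1 k) ` {K. dzK K g \<noteq> 0})" using finite_dzK by simp
  qed
  have finZ: "finite {K. zv k * wick_term s f g K \<noteq> 0}"
    by (rule finite_subset[OF _ fin_wt[of s f g]]) auto
  have "wick s f (zv k * g) = Sum_any (\<lambda>K. zv k * wick_term s f g K + B K)"
    unfolding wick_SA by (rule Sum_any.cong) (unfold wick_term_wc dzK_zv_mult B_def, simp add: algebra_simps)
  also have "\<dots> = Sum_any (\<lambda>K. zv k * wick_term s f g K) + Sum_any B"
    by (rule SA_add[OF finZ finB])
  also have "Sum_any (\<lambda>K. zv k * wick_term s f g K) = zv k * wick s f g"
    unfolding wick_SA by (rule SA_lin[OF fin_wt, symmetric]) (simp_all add: algebra_simps)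
  also have "Sum_any B = Sum_any (\<lambda>K. B (K + e1 k))"
    by (rule SA_shift) (simp add: B_def)
  also have "\<dots> = Sum_any (\<lambda>K. cst (of_real s) * wick_term s (dzb k f) g K)"
  proof (rule Sum_any.cong)
    fix K
    have "B (K + e1 k) = cst (wc s (K + e1 k) * of_nat (Poly_Mapping.lookup K k + 1)) * (dzbK (K + e1 k) f * dzK K g)"
      by (simp add: B_def pm_lookup_add1 pm_add_sub_same cst_mult)
    also have "\<dots> = cst (of_real s) * wick_term s (dzb k f) g K"
      by (simp only: wc_add1 dzbK_add1' wick_term_wc cst_mult mult.assoc)
    finally show "B (K + e1 k) = cst (of_real s) * wick_term s (dzb k f) g K" .
  qed
  also have "\<dots> = cst (of_real s) * wick s (dzb k f) g"
    unfolding wick_SA by (rule SA_lin[OF fin_wt, symmetric]) (simp_all add: algebra_simps)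
  finally show ?thesis .
qed

lemma dz_wick: "dz k (wick s f g) = wick s (dz k f) g + wick s f (dz k g)"
proof -
  have "dz k (wick s f g) = Sum_any (\<lambda>K. dz k (wick_term s f g K))"
    unfolding wick_SA by (rule SA_lin[OF fin_wt]) (simp_all add: dz_add)
  also have "\<dots> = Sum_any (\<lambda>K. wick_term s (dz k f) g K + wick_term s f (dz k g) K)"
    by (rule Sum_any.cong) (simp add: wick_term_wc dz_cst_mult dz_mult dz_dzK dz_dzbK algebra_simps)
  also have "\<dots> = wick s (dz k f) g + wick s f (dz k g)"
    unfolding wick_SA by (rule SA_add[OF fin_wt fin_wt])
  finally show ?thesis .
qed

lemma dzb_wick: "dzb k (wick s f g) = wick s (dzb k f) g + wick s f (dzb k g)"
proof -
  have "dzb k (wick s f g) = Sum_any (\<lambda>K. dzb k (wick_term s f g K))"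
    unfolding wick_SA by (rule SA_lin[OF fin_wt]) (simp_all add: dzb_add)
  also have "\<dots> = Sum_any (\<lambda>K. wick_term s (dzb k f) g K + wick_term s f (dzb k g) K)"
    by (rule Sum_any.cong) (simp add: wick_term_wc dzb_cst_mult dzb_mult dzb_dzK dzb_dzbK algebra_simps)
  also have "\<dots> = wick s (dzb k f) g + wick s f (dzb k g)"
    unfolding wick_SA by (rule SA_add[OF fin_wt fin_wt])
  finally show ?thesis .
qed



lemma cst_numeral: "cst (numeral w) = numeral w" by (simp add: cst_def)
lemma dz_if: "dz j (if P then a else b) = (if P then dz j a else dz j b)" by simp

lemma lap_add: "lap n (f + g) = lap n f + lap n g"
  by (simp add: lap_def dz_add dzb_add sum.distrib)
lemma lap_zero[simp]: "lap n 0 = 0" by (simp add: lap_def)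
lemma lap_cst_mult: "lap n (cst c * f) = cst c * lap n f"
  by (simp add: lap_def dz_cst_mult dzb_cst_mult sum_distrib_left)
lemma lap_cst[simp]: "lap n (cst c) = 0" by (simp add: lap_def)
lemma lap_dz: "lap n (dz k f) = dz k (lap n f)"
proof -
  have "dz k (\<Sum>j\<le>n. dz j (dzb j f)) = (\<Sum>j\<le>n. dz k (dz j (dzb j f)))"
    by (induction n) (simp_all add: dz_add)
  then show ?thesis by (simp add: lap_def dz_dz_comm dz_dzb_comm)
qed
lemma lap_dzb: "lap n (dzb k f) = dzb k (lap n f)"
proof -
  have "dzb k (\<Sum>j\<le>n. dz j (dzb j f)) = (\<Sum>j\<le>n. dzb k (dz j (dzb j f)))"
    by (induction n) (simp_all add: dzb_add)
  then show ?thesis by (simp add: lap_def dzb_dzb_comm dz_dzb_comm)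
qed

lemma lap_zv: "lap n (zv k * u) = zv k * lap n u + (if k \<le> n then dzb k u else 0)"
proof -
  have "lap n (zv k * u) = (\<Sum>j\<le>n. zv k * dz j (dzb j u) + (if j = k then dzb j u else 0))"
    by (simp add: lap_def dzb_zv_mult dz_zv_mult add.commute)
  also have "\<dots> = zv k * lap n u + (\<Sum>j\<le>n. if j = k then dzb j u else 0)"
    by (simp add: sum.distrib lap_def sum_distrib_left)
  finally show ?thesis by (simp add: sum.delta)
qed

lemma lap_zbv: "lap n (zbv k * u) = zbv k * lap n u + (if k \<le> n then dz k u else 0)"
proof -
  have "lap n (zbv k * u) = (\<Sum>j\<le>n. zbv k * dz j (dzb j u) + (if j = k then dz j u else 0))"
    by (simp add: lap_def dzb_zbv_mult dz_zbv_mult dz_add dz_if add.commute cong: if_cong)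
  also have "\<dots> = zbv k * lap n u + (\<Sum>j\<le>n. if j = k then dz j u else 0)"
    by (simp add: sum.distrib lap_def sum_distrib_left)
  finally show ?thesis by (simp add: sum.delta)
qed

lemma lapp_add: "(lap n ^^ m) (f + g) = (lap n ^^ m) f + (lap n ^^ m) g"
  by (induction m) (simp_all add: lap_add)
lemma lapp_zero[simp]: "(lap n ^^ m) 0 = 0"
  by (induction m) simp_all
lemma lapp_cst_mult: "(lap n ^^ m) (cst c * f) = cst c * (lap n ^^ m) f"
  by (induction m) (simp_all add: lap_cst_mult)
lemma lapp_dz: "(lap n ^^ m) (dz k f) = dz k ((lap n ^^ m) f)"
  by (induction m) (simp_all add: lap_dz)
lemma lapp_dzb: "(lap n ^^ m) (dzb k f) = dzb k ((lap n ^^ m) f)"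
  by (induction m) (simp_all add: lap_dzb)
lemma lapp_sum: "(lap n ^^ m) (sum F A) = (\<Sum>a\<in>A. (lap n ^^ m) (F a))"
  by (induction A rule: infinite_finite_induct) (simp_all add: lapp_add)
lemma lapp_beyond: "(lap n ^^ N) u = 0 \<Longrightarrow> N \<le> m \<Longrightarrow> (lap n ^^ m) u = 0"
proof -
  assume "(lap n ^^ N) u = 0" "N \<le> m"
  then obtain d where "m = d + N" by (metis le_add_diff_inverse2)
  then show ?thesis using \<open>(lap n ^^ N) u = 0\<close> by (simp add: funpow_add)
qed

lemma lapp_zv: "k \<le> n \<Longrightarrow> (lap n ^^ Suc m) (zv k * u) = zv k * (lap n ^^ Suc m) u + cst (of_nat (Suc m)) * dzb k ((lap n ^^ m) u)"
proof (induction m)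
  case 0
  then show ?case by (simp add: lap_zv)
next
  case (Suc m)
  have "(lap n ^^ Suc (Suc m)) (zv k * u) = lap n ((lap n ^^ Suc m) (zv k * u))" by simp
  also have "\<dots> = zv k * (lap n ^^ Suc (Suc m)) u + dzb k ((lap n ^^ Suc m) u)
     + cst (of_nat (Suc m)) * dzb k ((lap n ^^ Suc m) u)"
    using Suc by (simp add: lap_add lap_zv lap_cst_mult lap_dzb)
  also have "\<dots> = zv k * (lap n ^^ Suc (Suc m)) u + cst (of_nat (Suc (Suc m))) * dzb k ((lap n ^^ Suc m) u)"
    by (simp add: cst_add cst_numeral algebra_simps)
  finally show ?case .
qed

lemma lapp_zbv: "k \<le> n \<Longrightarrow> (lap n ^^ Suc m) (zbv k * u) = zbv k * (lap n ^^ Suc m) u + cst (of_nat (Suc m)) * dz k ((lap n ^^ m) u)"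
proof (induction m)
  case 0
  then show ?case by (simp add: lap_zbv)
next
  case (Suc m)
  have "(lap n ^^ Suc (Suc m)) (zbv k * u) = lap n ((lap n ^^ Suc m) (zbv k * u))" by simp
  also have "\<dots> = zbv k * (lap n ^^ Suc (Suc m)) u + dz k ((lap n ^^ Suc m) u)
     + cst (of_nat (Suc m)) * dz k ((lap n ^^ Suc m) u)"
    using Suc by (simp add: lap_add lap_zbv lap_cst_mult lap_dz)
  also have "\<dots> = zbv k * (lap n ^^ Suc (Suc m)) u + cst (of_nat (Suc (Suc m))) * dz k ((lap n ^^ Suc m) u)"
    by (simp add: cst_add cst_numeral algebra_simps)
  finally show ?case .
qed



definition dl :: "nat \<Rightarrow> cpoly \<Rightarrow> bool" where
  "dl N u \<longleftrightarrow> (\<forall>m\<in>Poly_Mapping.keys u. mabs (fst m) < N)"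

lemma keys_sum_sub: "Poly_Mapping.keys (sum (F :: 'a \<Rightarrow> cpoly) A) \<subseteq> (\<Union>a\<in>A. Poly_Mapping.keys (F a))"
proof (induction A rule: infinite_finite_induct)
  case (insert x F)
  then show ?case using keys_add by fastforce
qed auto

lemma keys_linop: "Poly_Mapping.keys (linop \<sigma> w f) \<subseteq> \<sigma> ` {m \<in> Poly_Mapping.keys f. w m \<noteq> 0}"
proof -
  have "Poly_Mapping.keys (linop \<sigma> w f) \<subseteq> (\<Union>m\<in>Poly_Mapping.keys f. Poly_Mapping.keys (sg (\<sigma> m) (w m * lk f m)))"
    unfolding linop_def by (rule keys_sum_sub)
  also have "\<dots> \<subseteq> \<sigma> ` {m \<in> Poly_Mapping.keys f. w m \<noteq> 0}"
    by (auto simp: in_keys_iff split: if_splits)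
  finally show ?thesis .
qed

lemma dl_add: assumes "dl N f" "dl N g" shows "dl N (f + g)"
  unfolding dl_def
proof
  fix m assume "m \<in> Poly_Mapping.keys (f + g)"
  then have "m \<in> Poly_Mapping.keys f \<union> Poly_Mapping.keys g" by (rule subsetD[OF keys_add])
  then show "mabs (fst m) < N" using assms unfolding dl_def by blast
qed

lemma dl_sum: assumes "\<And>a. a \<in> A \<Longrightarrow> dl N (F a)" shows "dl N (sum F A)"
  unfolding dl_def
proof
  fix m assume "m \<in> Poly_Mapping.keys (sum F A)"
  then have "m \<in> (\<Union>a\<in>A. Poly_Mapping.keys (F a))" by (rule subsetD[OF keys_sum_sub])
  then show "mabs (fst m) < N" using assms unfolding dl_def by blast
qed

lemma mabs_sub1: "0 < Poly_Mapping.lookup a j \<Longrightarrow> mabs (a - e1 j) + 1 = mabs a"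
  using mabs_add1[of "a - e1 j" j] pm_sub_add1[of a j] by simp

lemma dl_dz: assumes "dl (Suc N) f" shows "dl N (dz j f)"
  unfolding dl_def
proof
  fix m' assume "m' \<in> Poly_Mapping.keys (dz j f)"
  then have "m' \<in> (\<lambda>m. (fst m - e1 j, snd m)) ` {m \<in> Poly_Mapping.keys f. (of_nat (Poly_Mapping.lookup (fst m) j) :: complex) \<noteq> 0}"
    unfolding dz_linop by (rule subsetD[OF keys_linop])
  then obtain m where m: "m \<in> Poly_Mapping.keys f" "(of_nat (Poly_Mapping.lookup (fst m) j) :: complex) \<noteq> 0"
    and m': "m' = (fst m - e1 j, snd m)" by blast
  have "0 < Poly_Mapping.lookup (fst m) j" using m(2) by simp
  then have "mabs (fst m - e1 j) + 1 = mabs (fst m)" by (rule mabs_sub1)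
  moreover have "mabs (fst m) < Suc N" using assms m(1) unfolding dl_def by blast
  ultimately show "mabs (fst m') < N" using m' by simp
qed

lemma dl_dzb: assumes "dl N f" shows "dl N (dzb j f)"
  unfolding dl_def
proof
  fix m' assume "m' \<in> Poly_Mapping.keys (dzb j f)"
  then have "m' \<in> (\<lambda>m. (fst m, snd m - e1 j)) ` {m \<in> Poly_Mapping.keys f. (of_nat (Poly_Mapping.lookup (snd m) j) :: complex) \<noteq> 0}"
    unfolding dzb_linop by (rule subsetD[OF keys_linop])
  then obtain m where m: "m \<in> Poly_Mapping.keys f" and m': "m' = (fst m, snd m - e1 j)" by blast
  show "mabs (fst m') < N" using assms m m' unfolding dl_def by auto
qed

lemma dl_zero_eq: assumes "dl 0 u" shows "u = 0"
proof -
  have "Poly_Mapping.keys u = {}" using assms unfolding dl_def by blast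
  then show ?thesis by simp
qed

lemma dl_lap: "dl (Suc N) f \<Longrightarrow> dl N (lap n f)"
  unfolding lap_def by (rule dl_sum) (intro dl_dz dl_dzb)

lemma dl_lapp: "dl N u \<Longrightarrow> (lap n ^^ N) u = 0"
proof (induction N arbitrary: u)
  case 0
  then show ?case by (simp add: dl_zero_eq)
next
  case (Suc N)
  then show ?case by (simp add: funpow_Suc_right dl_lap del: funpow.simps)
qed

lemma dl_exists: "\<exists>N. dl N u"
proof
  show "dl (Suc (\<Sum>m\<in>Poly_Mapping.keys u. mabs (fst m))) u"
    unfolding dl_def
  proof
    fix m assume "m \<in> Poly_Mapping.keys u"
    then have "mabs (fst m) \<le> (\<Sum>m\<in>Poly_Mapping.keys u. mabs (fst m))"
      by (intro member_le_sum) auto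
    then show "mabs (fst m) < Suc (\<Sum>m\<in>Poly_Mapping.keys u. mabs (fst m))" by simp
  qed
qed

lemma nilp: "\<exists>N. (lap n ^^ N) u = 0"
  using dl_exists dl_lapp by blast

definition ec :: "real \<Rightarrow> nat \<Rightarrow> complex" where
  "ec s m = complex_of_real (s ^ m / fact m)"

definition ex :: "nat \<Rightarrow> real \<Rightarrow> cpoly \<Rightarrow> cpoly" where
  "ex n s u = Sum_any (\<lambda>m. cst (ec s m) * (lap n ^^ m) u)"

lemma exp_lap_ex: "exp_lap n h f = ex n (- h) f"
  by (simp add: exp_lap_def ex_def exp_term_def psmult_cst ec_def Sum_any.expand_set)

lemma ex_fin: assumes "(lap n ^^ N) u = 0"
  shows "ex n s u = (\<Sum>m<N. cst (ec s m) * (lap n ^^ m) u)"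
  unfolding ex_def
proof (rule Sum_any.expand_superset)
  show "{a. cst (ec s a) * (lap n ^^ a) u \<noteq> 0} \<subseteq> {..<N}"
  proof
    fix x assume "x \<in> {a. cst (ec s a) * (lap n ^^ a) u \<noteq> 0}"
    then have nz: "cst (ec s x) * (lap n ^^ x) u \<noteq> 0" by simp
    show "x \<in> {..<N}"
    proof (rule ccontr)
      assume "x \<notin> {..<N}"
      then have "(lap n ^^ x) u = 0" using lapp_beyond[OF assms, of x] by simp
      then show False using nz by simp
    qed
  qed
qed simp

lemma ec_Suc: "ec s (Suc m) * of_nat (Suc m) = complex_of_real s * ec s m"
proof -
  have f: "(fact m :: real) > 0" by simp
  have "(fact m :: real) + fact m * real m > 0" using f by (intro add_pos_nonneg) simp_all
  then have nz: "(fact m :: real) + fact m * real m \<noteq> 0" by simp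
  have "s ^ Suc m / fact (Suc m) * real (Suc m) = s * (s ^ m / fact m)"
    using f nz by (simp add: field_simps)
  then have "complex_of_real (s ^ Suc m / fact (Suc m)) * complex_of_real (real (Suc m)) = complex_of_real s * complex_of_real (s ^ m / fact m)"
    by (metis of_real_mult)
  then show ?thesis unfolding ec_def by simp
qed

lemma ec_0[simp]: "ec s 0 = 1" by (simp add: ec_def)

lemma ex_add: "ex n s (f + g) = ex n s f + ex n s g"
proof -
  obtain N1 where N1: "(lap n ^^ N1) f = 0" using nilp by blast
  obtain N2 where N2: "(lap n ^^ N2) g = 0" using nilp by blast
  let ?N = "max N1 N2"
  have f: "(lap n ^^ ?N) f = 0" by (rule lapp_beyond[OF N1]) simp
  have g: "(lap n ^^ ?N) g = 0" by (rule lapp_beyond[OF N2]) simp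
  have fg: "(lap n ^^ ?N) (f + g) = 0" by (simp add: lapp_add f g)
  show ?thesis by (simp add: ex_fin[OF f] ex_fin[OF g] ex_fin[OF fg] lapp_add algebra_simps sum.distrib)
qed

lemma ex_cst_mult: "ex n s (cst c * f) = cst c * ex n s f"
proof -
  obtain N where N: "(lap n ^^ N) f = 0" using nilp by blast
  have N': "(lap n ^^ N) (cst c * f) = 0" by (simp add: lapp_cst_mult N)
  show ?thesis unfolding ex_fin[OF N] ex_fin[OF N'] lapp_cst_mult by (simp add: sum_distrib_left algebra_simps)
qed

lemma ex_cst: "ex n s (cst c) = cst c"
proof -
  have "(lap n ^^ 1) (cst c) = 0" by simp
  from ex_fin[OF this, of s] show ?thesis by simp
qed

lemma dz_sum: "dz k (sum F A) = (\<Sum>a\<in>A. dz k (F a))"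
  by (induction A rule: infinite_finite_induct) (simp_all add: dz_add)
lemma dzb_sum: "dzb k (sum F A) = (\<Sum>a\<in>A. dzb k (F a))"
  by (induction A rule: infinite_finite_induct) (simp_all add: dzb_add)

lemma ex_dz: "ex n s (dz k f) = dz k (ex n s f)"
proof -
  obtain N where N: "(lap n ^^ N) f = 0" using nilp by blast
  have N': "(lap n ^^ N) (dz k f) = 0" by (simp add: lapp_dz N)
  show ?thesis unfolding ex_fin[OF N] ex_fin[OF N'] by (simp add: lapp_dz dz_sum dz_cst_mult)
qed

lemma ex_dzb: "ex n s (dzb k f) = dzb k (ex n s f)"
proof -
  obtain N where N: "(lap n ^^ N) f = 0" using nilp by blast
  have N': "(lap n ^^ N) (dzb k f) = 0" by (simp add: lapp_dzb N)
  show ?thesis unfolding ex_fin[OF N] ex_fin[OF N'] by (simp add: lapp_dzb dzb_sum dzb_cst_mult)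
qed

lemma ex_zv: assumes k: "k \<le> n"
  shows "ex n s (zv k * u) = zv k * ex n s u + cst (of_real s) * dzb k (ex n s u)"
proof -
  obtain N where N: "(lap n ^^ N) u = 0" using nilp by blast
  have N1: "(lap n ^^ Suc N) u = 0" by (rule lapp_beyond[OF N]) simp
  have N': "(lap n ^^ Suc N) (zv k * u) = 0" by (simp only: lapp_zv[OF k] N1 N) simp
  have "ex n s (zv k * u) = (\<Sum>m<Suc N. cst (ec s m) * (lap n ^^ m) (zv k * u))"
    by (rule ex_fin[OF N'])
  also have "\<dots> = zv k * u + (\<Sum>m<N. cst (ec s (Suc m)) * (lap n ^^ Suc m) (zv k * u))"
    by (simp only: sum.lessThan_Suc_shift) simp
  also have "\<dots> = zv k * u + (\<Sum>m<N. zv k * (cst (ec s (Suc m)) * (lap n ^^ Suc m) u)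
       + cst (of_real s) * (cst (ec s m) * dzb k ((lap n ^^ m) u)))"
  proof -
    have "cst (ec s (Suc m)) * (lap n ^^ Suc m) (zv k * u) = zv k * (cst (ec s (Suc m)) * (lap n ^^ Suc m) u)
       + cst (of_real s) * (cst (ec s m) * dzb k ((lap n ^^ m) u))" for m
    proof -
      have fact1: "cst (ec s (Suc m)) * cst (of_nat (Suc m)) = cst (of_real s) * cst (ec s m)"
        by (simp only: cst_mult[symmetric] ec_Suc)
      have "cst (ec s (Suc m)) * (lap n ^^ Suc m) (zv k * u) = zv k * (cst (ec s (Suc m)) * (lap n ^^ Suc m) u)
         + (cst (ec s (Suc m)) * cst (of_nat (Suc m))) * dzb k ((lap n ^^ m) u)"
        unfolding lapp_zv[OF k] by (simp only: distrib_left mult.assoc mult.left_commute)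
      also have "\<dots> = zv k * (cst (ec s (Suc m)) * (lap n ^^ Suc m) u)
       + cst (of_real s) * (cst (ec s m) * dzb k ((lap n ^^ m) u))"
        by (simp only: fact1 mult.assoc)
      finally show ?thesis .
    qed
    then show ?thesis by simp
  qed
  also have "\<dots> = zv k * (u + (\<Sum>m<N. cst (ec s (Suc m)) * (lap n ^^ Suc m) u))
      + cst (of_real s) * dzb k (\<Sum>m<N. cst (ec s m) * (lap n ^^ m) u)"
    by (simp add: sum.distrib sum_distrib_left dzb_sum dzb_cst_mult algebra_simps del: funpow.simps)
  also have "\<dots> = zv k * ex n s u + cst (of_real s) * dzb k (ex n s u)"
  proof -
    have A: "u + (\<Sum>m<N. cst (ec s (Suc m)) * (lap n ^^ Suc m) u) = (\<Sum>m<Suc N. cst (ec s m) * (lap n ^^ m) u)"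
      by (simp only: sum.lessThan_Suc_shift) simp
    show ?thesis by (simp only: A ex_fin[OF N, symmetric] ex_fin[OF N1, symmetric])
  qed
  finally show ?thesis .
qed

lemma ex_zbv: assumes k: "k \<le> n"
  shows "ex n s (zbv k * u) = zbv k * ex n s u + cst (of_real s) * dz k (ex n s u)"
proof -
  obtain N where N: "(lap n ^^ N) u = 0" using nilp by blast
  have N1: "(lap n ^^ Suc N) u = 0" by (rule lapp_beyond[OF N]) simp
  have N': "(lap n ^^ Suc N) (zbv k * u) = 0" by (simp only: lapp_zbv[OF k] N1 N) simp
  have "ex n s (zbv k * u) = (\<Sum>m<Suc N. cst (ec s m) * (lap n ^^ m) (zbv k * u))"
    by (rule ex_fin[OF N'])
  also have "\<dots> = zbv k * u + (\<Sum>m<N. cst (ec s (Suc m)) * (lap n ^^ Suc m) (zbv k * u))"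
    by (simp only: sum.lessThan_Suc_shift) simp
  also have "\<dots> = zbv k * u + (\<Sum>m<N. zbv k * (cst (ec s (Suc m)) * (lap n ^^ Suc m) u)
       + cst (of_real s) * (cst (ec s m) * dz k ((lap n ^^ m) u)))"
  proof -
    have "cst (ec s (Suc m)) * (lap n ^^ Suc m) (zbv k * u) = zbv k * (cst (ec s (Suc m)) * (lap n ^^ Suc m) u)
       + cst (of_real s) * (cst (ec s m) * dz k ((lap n ^^ m) u))" for m
    proof -
      have fact1: "cst (ec s (Suc m)) * cst (of_nat (Suc m)) = cst (of_real s) * cst (ec s m)"
        by (simp only: cst_mult[symmetric] ec_Suc)
      have "cst (ec s (Suc m)) * (lap n ^^ Suc m) (zbv k * u) = zbv k * (cst (ec s (Suc m)) * (lap n ^^ Suc m) u)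
         + (cst (ec s (Suc m)) * cst (of_nat (Suc m))) * dz k ((lap n ^^ m) u)"
        unfolding lapp_zbv[OF k] by (simp only: distrib_left mult.assoc mult.left_commute)
      also have "\<dots> = zbv k * (cst (ec s (Suc m)) * (lap n ^^ Suc m) u)
       + cst (of_real s) * (cst (ec s m) * dz k ((lap n ^^ m) u))"
        by (simp only: fact1 mult.assoc)
      finally show ?thesis .
    qed
    then show ?thesis by simp
  qed
  also have "\<dots> = zbv k * (u + (\<Sum>m<N. cst (ec s (Suc m)) * (lap n ^^ Suc m) u))
      + cst (of_real s) * dz k (\<Sum>m<N. cst (ec s m) * (lap n ^^ m) u)"
    by (simp add: sum.distrib sum_distrib_left dz_sum dz_cst_mult algebra_simps del: funpow.simps)
  also have "\<dots> = zbv k * ex n s u + cst (of_real s) * dz k (ex n s u)"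
  proof -
    have A: "u + (\<Sum>m<N. cst (ec s (Suc m)) * (lap n ^^ Suc m) u) = (\<Sum>m<Suc N. cst (ec s m) * (lap n ^^ m) u)"
      by (simp only: sum.lessThan_Suc_shift) simp
    show ?thesis by (simp only: A ex_fin[OF N, symmetric] ex_fin[OF N1, symmetric])
  qed
  finally show ?thesis .
qed



definition good :: "nat \<Rightarrow> mono \<Rightarrow> bool" where
  "good n m \<longleftrightarrow> Poly_Mapping.keys (fst m) \<subseteq> {..n} \<and> Poly_Mapping.keys (snd m) \<subseteq> {..n}"

lemma Pn_iff: "f \<in> Pn n \<longleftrightarrow> (\<forall>m\<in>Poly_Mapping.keys f. good n m)"
  by (simp add: Pn_def good_def)

lemma Pn_add: assumes "f \<in> Pn n" "g \<in> Pn n" shows "f + g \<in> Pn n"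
  unfolding Pn_iff
proof
  fix m assume "m \<in> Poly_Mapping.keys (f + g)"
  then have "m \<in> Poly_Mapping.keys f \<union> Poly_Mapping.keys g" by (rule subsetD[OF keys_add])
  then show "good n m" using assms unfolding Pn_iff by blast
qed

lemma Pn_zero: "0 \<in> Pn n" by (simp add: Pn_iff)

lemma Pn_sum: "(\<And>a. a \<in> A \<Longrightarrow> F a \<in> Pn n) \<Longrightarrow> sum F A \<in> Pn n"
  by (induction A rule: infinite_finite_induct) (simp_all add: Pn_zero Pn_add)

lemma Pn_linop:
  assumes "\<And>m. good n m \<Longrightarrow> good n (\<sigma> m)" "f \<in> Pn n"
  shows "linop \<sigma> w f \<in> Pn n"
  unfolding Pn_iff
proof
  fix m' assume "m' \<in> Poly_Mapping.keys (linop \<sigma> w f)"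
  then have "m' \<in> \<sigma> ` {m \<in> Poly_Mapping.keys f. w m \<noteq> 0}" by (rule subsetD[OF keys_linop])
  then show "good n m'" using assms unfolding Pn_iff by blast
qed

lemma keys_sub1: "Poly_Mapping.keys (a - e1 j) \<subseteq> Poly_Mapping.keys a"
  by (auto simp: in_keys_iff lookup_minus)

lemma good_sub1: "good n m \<Longrightarrow> good n (fst m - e1 j, snd m)"
  using keys_sub1[of "fst m" j] by (auto simp: good_def)
lemma good_sub2: "good n m \<Longrightarrow> good n (fst m, snd m - e1 j)"
  using keys_sub1[of "snd m" j] by (auto simp: good_def)
lemma Pn_dz: "f \<in> Pn n \<Longrightarrow> dz j f \<in> Pn n"
  unfolding dz_linop by (rule Pn_linop) (simp_all add: good_sub1)
lemma Pn_dzb: "f \<in> Pn n \<Longrightarrow> dzb j f \<in> Pn n"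
  unfolding dzb_linop by (rule Pn_linop) (simp_all add: good_sub2)
lemma Pn_compconj: "f \<in> Pn n \<Longrightarrow> compconj f \<in> Pn n"
  unfolding compconj_linop by (rule Pn_linop) (auto simp: good_def)

lemma cst_mult_linop: "cst c * f = linop (\<lambda>m. m) (\<lambda>m. c) f"
  by (rule add_ext[where F="\<lambda>f. cst c * f" and G="linop (\<lambda>m. m) (\<lambda>m. c)"])
     (simp_all add: algebra_simps linop_add linop_single cst_sg)

lemma Pn_cst_mult: "f \<in> Pn n \<Longrightarrow> cst c * f \<in> Pn n"
  unfolding cst_mult_linop by (rule Pn_linop) auto

lemma Pn_lap: "f \<in> Pn n \<Longrightarrow> lap k f \<in> Pn n"
  unfolding lap_def by (rule Pn_sum) (intro Pn_dz Pn_dzb)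

lemma Pn_lapp: "f \<in> Pn n \<Longrightarrow> (lap k ^^ m) f \<in> Pn n"
  by (induction m) (simp_all add: Pn_lap)

lemma Pn_ex: "f \<in> Pn n \<Longrightarrow> ex k s f \<in> Pn n"
proof -
  assume f: "f \<in> Pn n"
  obtain N where N: "(lap k ^^ N) f = 0" using nilp by blast
  show ?thesis unfolding ex_fin[OF N] by (rule Pn_sum) (intro Pn_cst_mult Pn_lapp f)
qed

lemma Pn_sg: "Poly_Mapping.keys a \<subseteq> {..n} \<Longrightarrow> Poly_Mapping.keys b \<subseteq> {..n} \<Longrightarrow> sg (a,b) c \<in> Pn n"
  by (simp add: Pn_iff good_def)

lemma zv_sg: "zv k * sg (a,b) c = sg (e1 k + a, b) c"
  by (simp add: zv_def sg_mult)
lemma zbv_sg: "zbv k * sg (a,b) c = sg (a, e1 k + b) c"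
  by (simp add: zbv_def sg_mult)

lemma Pn_induct[consumes 1, case_names cst zv zbv add]:
  assumes f: "f \<in> Pn n"
    and c: "\<And>c. P (cst c)"
    and z: "\<And>k u. k \<le> n \<Longrightarrow> u \<in> Pn n \<Longrightarrow> P u \<Longrightarrow> P (zv k * u)"
    and zb: "\<And>k u. k \<le> n \<Longrightarrow> u \<in> Pn n \<Longrightarrow> P u \<Longrightarrow> P (zbv k * u)"
    and a: "\<And>u v. P u \<Longrightarrow> P v \<Longrightarrow> P (u + v)"
  shows "P f"
proof -
  have sgP: "P (sg (a,b) c)" if "Poly_Mapping.keys a \<subseteq> {..n}" "Poly_Mapping.keys b \<subseteq> {..n}" for a b c
    using that
  proof (induction "mabs a + mabs b" arbitrary: a b rule: less_induct)
    case less
    show ?case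
    proof (cases "a = 0")
      case False
      then obtain k where k: "k \<in> Poly_Mapping.keys a" by (metis keys_eq_empty ex_in_conv)
      then have kk: "0 < Poly_Mapping.lookup a k" by (simp add: in_keys_iff)
      have eq: "e1 k + (a - e1 k) = a" using pm_sub_add1[OF kk] by (simp add: add.commute)
      have ks: "Poly_Mapping.keys (a - e1 k) \<subseteq> {..n}" using keys_sub1 less.prems by blast
      have "mabs (a - e1 k) < mabs a" using mabs_sub1[OF kk] by simp
      then have "P (sg (a - e1 k, b) c)" using less ks by simp
      moreover have "k \<le> n" using k less.prems by auto
      moreover have "sg (a - e1 k, b) c \<in> Pn n" using ks less.prems by (intro Pn_sg)
      ultimately have "P (zv k * sg (a - e1 k, b) c)" by (intro z)
      then show ?thesis by (simp add: zv_sg eq)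
    next
      case a0: True
      show ?thesis
      proof (cases "b = 0")
        case False
        then obtain k where k: "k \<in> Poly_Mapping.keys b" by (metis keys_eq_empty ex_in_conv)
        then have kk: "0 < Poly_Mapping.lookup b k" by (simp add: in_keys_iff)
        have eq: "e1 k + (b - e1 k) = b" using pm_sub_add1[OF kk] by (simp add: add.commute)
        have ks: "Poly_Mapping.keys (b - e1 k) \<subseteq> {..n}" using keys_sub1 less.prems by blast
        have "mabs (b - e1 k) < mabs b" using mabs_sub1[OF kk] by simp
        then have "P (sg (a, b - e1 k) c)" using less ks by simp
        moreover have "k \<le> n" using k less.prems by auto
        moreover have "sg (a, b - e1 k) c \<in> Pn n" using less.prems ks by (intro Pn_sg)
        ultimately have "P (zbv k * sg (a, b - e1 k) c)" by (intro zb)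
        then show ?thesis by (simp add: zbv_sg eq)
      next
        case True
        then show ?thesis using a0 c by (simp add: sg0)
      qed
    qed
  qed
  have "P (\<Sum>m\<in>A. sg m (lk f m))" if "finite A" "A \<subseteq> Poly_Mapping.keys f" for A
    using that
  proof (induction A rule: finite_induct)
    case empty
    then show ?case using c[of 0] by simp
  next
    case (insert x F)
    obtain a b where ab: "x = (a,b)" by (cases x)
    have "good n x" using insert.prems f unfolding Pn_iff by blast
    then have "P (sg x (lk f x))" using sgP ab by (simp add: good_def)
    then show ?case using insert by (simp add: a)
  qed
  then show ?thesis by (subst cpoly_expand) simp
qed



lemma Theta_ex: "Theta n h f = compconj (ex n (- h) f)"
  by (simp add: Theta_def exp_lap_ex)

lemma Th_add: "Theta n h (f + g) = Theta n h f + Theta n h g"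
  by (simp add: Theta_ex ex_add compconj_add)
lemma Th_cst_mult: "Theta n h (cst c * f) = cst c * Theta n h f"
  by (simp add: Theta_ex ex_cst_mult compconj_mult)
lemma Th_cst: "Theta n h (cst c) = cst c"
  by (simp add: Theta_ex ex_cst)
lemma Th_dzb: "Theta n h (dzb k f) = dz k (Theta n h f)"
  by (simp add: Theta_ex ex_dzb compconj_dzb)
lemma Th_dz: "Theta n h (dz k f) = dzb k (Theta n h f)"
  by (simp add: Theta_ex ex_dz compconj_dz)
lemma Th_zv: "k \<le> n \<Longrightarrow> Theta n h (zv k * u) = zbv k * Theta n h u + cst (of_real (- h)) * dz k (Theta n h u)"
  by (simp add: Theta_ex ex_zv compconj_add compconj_mult compconj_zv compconj_dzb)
lemma Th_zbv: "k \<le> n \<Longrightarrow> Theta n h (zbv k * u) = zv k * Theta n h u + cst (of_real (- h)) * dzb k (Theta n h u)"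
  by (simp add: Theta_ex ex_zbv compconj_add compconj_mult compconj_zbv compconj_dz)

lemma wick_hom:
  assumes g: "g \<in> Pn n"
  shows "\<forall>f. Theta n h (wick h f g) = wick (- h) (Theta n h f) (Theta n h g)"
  using g
proof (induction g rule: Pn_induct)
  case (cst c)
  show ?case by (simp add: wick_cst_right Th_cst_mult Th_cst)
next
  case (add u v)
  then show ?case by (simp add: wick_add_right Th_add)
next
  case (zv k u)
  show ?case
  proof
    fix f
    let ?X = "wick (- h) (Theta n h f) (Theta n h u)"
    let ?Y1 = "wick (- h) (dz k (Theta n h f)) (Theta n h u)"
    let ?Y2 = "wick (- h) (Theta n h f) (dz k (Theta n h u))"
    have "Theta n h (wick h f (zv k * u)) = Theta n h (zv k * wick h f u + cst (of_real h) * wick h (dzb k f) u)"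
      by (simp add: wick_zv_right)
    also have "\<dots> = zbv k * ?X + cst (of_real (- h)) * dz k ?X + cst (of_real h) * ?Y1"
      using zv by (simp add: Th_add Th_zv Th_cst_mult Th_dzb)
    also have "\<dots> = zbv k * ?X + cst (of_real (- h)) * ?Y2"
      by (simp add: dz_wick cst_uminus algebra_simps)
    also have "\<dots> = wick (- h) (Theta n h f) (Theta n h (zv k * u))"
      using zv by (simp add: Th_zv wick_add_right wick_zbv_right wick_cst_mult_right)
    finally show "Theta n h (wick h f (zv k * u)) = wick (- h) (Theta n h f) (Theta n h (zv k * u))" .
  qed
next
  case (zbv k u)
  show ?case
  proof
    fix f
    let ?X = "wick (- h) (Theta n h f) (Theta n h u)"
    let ?Z1 = "wick (- h) (dzb k (Theta n h f)) (Theta n h u)"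
    let ?Z2 = "wick (- h) (Theta n h f) (dzb k (Theta n h u))"
    have "Theta n h (wick h f (zbv k * u)) = Theta n h (zbv k * wick h f u)"
      by (simp add: wick_zbv_right)
    also have "\<dots> = zv k * ?X + cst (of_real (- h)) * (?Z1 + ?Z2)"
      using zbv by (simp add: Th_zbv dzb_wick)
    also have "\<dots> = zv k * ?X + cst (of_real (- h)) * ?Z1 + cst (of_real (- h)) * ?Z2"
      by (simp only: distrib_left add.assoc)
    also have "\<dots> = wick (- h) (Theta n h f) (zv k * Theta n h u + cst (of_real (- h)) * dzb k (Theta n h u))"
      by (simp only: wick_add_right wick_zv_right wick_cst_mult_right)
    also have "\<dots> = wick (- h) (Theta n h f) (Theta n h (zbv k * u))"
      using zbv by (simp only: Th_zbv)
    finally show "Theta n h (wick h f (zbv k * u)) = wick (- h) (Theta n h f) (Theta n h (zbv k * u))" .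
  qed
qed

lemma ex_ex: "u \<in> Pn n \<Longrightarrow> ex n t (ex n s u) = ex n (t + s) u"
proof (induction u rule: Pn_induct)
  case (cst c)
  then show ?case by (simp add: ex_cst)
next
  case (zv k u)
  have "ex n t (ex n s (zv k * u)) = zv k * ex n t (ex n s u) + cst (of_real t) * dzb k (ex n t (ex n s u))
      + cst (of_real s) * dzb k (ex n t (ex n s u))"
    using zv by (simp only: ex_zv ex_add ex_cst_mult ex_dzb)
  also have "\<dots> = zv k * ex n (t + s) u + cst (of_real (t + s)) * dzb k (ex n (t + s) u)"
    using zv by (simp only: of_real_add cst_add distrib_right add.assoc)
  also have "\<dots> = ex n (t + s) (zv k * u)"
    using zv by (simp only: ex_zv)
  finally show ?case .
next
  case (zbv k u)
  have "ex n t (ex n s (zbv k * u)) = zbv k * ex n t (ex n s u) + cst (of_real t) * dz k (ex n t (ex n s u))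
      + cst (of_real s) * dz k (ex n t (ex n s u))"
    using zbv by (simp only: ex_zbv ex_add ex_cst_mult ex_dz)
  also have "\<dots> = zbv k * ex n (t + s) u + cst (of_real (t + s)) * dz k (ex n (t + s) u)"
    using zbv by (simp only: of_real_add cst_add distrib_right add.assoc)
  also have "\<dots> = ex n (t + s) (zbv k * u)"
    using zbv by (simp only: ex_zbv)
  finally show ?case .
next
  case (add u v)
  then show ?case by (simp add: ex_add)
qed

lemma ex_0: "u \<in> Pn n \<Longrightarrow> ex n 0 u = u"
proof (induction u rule: Pn_induct)
  case (cst c)
  then show ?case by (simp add: ex_cst)
next
  case (zv k u)
  then show ?case by (simp add: ex_zv)
next
  case (zbv k u)
  then show ?case by (simp add: ex_zbv)
next
  case (add u v)
  then show ?case by (simp add: ex_add)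
qed

lemma ex_pconj: "u \<in> Pn n \<Longrightarrow> ex n s (pconj u) = pconj (ex n s u)"
proof (induction u rule: Pn_induct)
  case (cst c)
  then show ?case by (simp add: ex_cst pconj_cst)
next
  case (zv k u)
  then show ?case
    by (simp add: pconj_mult pconj_zv ex_zbv ex_zv pconj_add pconj_cst pconj_dzb)
next
  case (zbv k u)
  then show ?case
    by (simp add: pconj_mult pconj_zbv ex_zbv ex_zv pconj_add pconj_cst pconj_dz)
next
  case (add u v)
  then show ?case by (simp add: ex_add pconj_add)
qed

theorem lemma6p3:
  fixes n :: nat and h :: real
  assumes "h > 0"
  shows "bij_betw (Theta n h) (Pn n) (Pn n)
     \<and> (\<forall>f\<in>Pn n. \<forall>g\<in>Pn n. \<forall>c \<in> (UNIV :: complex set).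
          Theta n h (f + g) = Theta n h f + Theta n h g
        \<and> Theta n h (psmult c f) = psmult c (Theta n h f))
     \<and> (\<forall>f\<in>Pn n. \<forall>g\<in>Pn n. Theta n h (wick h f g) = wick (- h) (Theta n h f) (Theta n h g))
     \<and> (\<forall>f\<in>Pn n. Theta n h (pconj f) = pconj (Theta n h f))"
proof (intro conjI ballI)
  show "bij_betw (Theta n h) (Pn n) (Pn n)"
  proof (rule bij_betw_byWitness[where f'="\<lambda>v. ex n h (compconj v)"])
    show "\<forall>a\<in>Pn n. ex n h (compconj (Theta n h a)) = a"
      by (simp add: Theta_ex ex_ex ex_0 Pn_ex)
    show "\<forall>a\<in>Pn n. Theta n h (ex n h (compconj a)) = a"
      by (simp add: Theta_ex ex_ex ex_0 Pn_compconj)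
    show "Theta n h ` Pn n \<subseteq> Pn n"
      by (auto simp: Theta_ex intro: Pn_compconj Pn_ex)
    show "(\<lambda>v. ex n h (compconj v)) ` Pn n \<subseteq> Pn n"
      by (auto intro: Pn_compconj Pn_ex)
  qed
next
  fix f g c
  show "Theta n h (f + g) = Theta n h f + Theta n h g" by (rule Th_add)
  show "Theta n h (psmult c f) = psmult c (Theta n h f)" by (simp add: psmult_cst Th_cst_mult)
next
  fix f g assume "f \<in> Pn n" "g \<in> Pn n"
  then show "Theta n h (wick h f g) = wick (- h) (Theta n h f) (Theta n h g)"
    using wick_hom by blast
next
  fix f assume "f \<in> Pn n"
  then show "Theta n h (pconj f) = pconj (Theta n h f)"
    by (simp add: Theta_ex ex_pconj pconj_compconj)
qed


end
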